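(* Let $s>0$, $Y>3s$, and for $\tau\geq0$ put $x_+(\tau)=\frac sYe^{s\tau}$, $\tau^*=\frac1s\ln\left(\frac Y{3s}\right)$, and consider the characteristic equation \[ \lambda^2+p(\tau)\lambda+(q\lambda+c(\tau))e^{-\lambda\tau}+\alpha(\tau)=0, \tag{C} \] with $p(\tau)=s\left(1+\frac{e^{s\tau}}{Y}\right)$, $q=-s$, $c(\tau)=s\left(1-\frac{2se^{s\tau}}{Y}\right)$, $\alpha(\tau)=\frac{s^2e^{s\tau}}{Y}$. Define for $\tau\in[0,\tau^*]$ \[ \omega_+(\tau)=\sqrt{\tfrac12\left(-x_+(\tau)^2+\sqrt{x_+(\tau)^4+s^2\left(12x_+(\tau)^2-16x_+(\tau)+4\right)}\right)}, \] \[ h_2(\omega,\tau)=\frac{\omega^2(1+s-x_+(\tau))-(1-2x_+(\tau))s\,x_+(\tau)}{s\left((1-2x_+(\tau))^2+\omega^2\right)}, \qquad \theta(\tau)=\arccos\big(h_2(\omega_+(\tau),\tau)\big)\in[0,\pi]. \] For each integer $n\geq0$, let $\tau_n^1<\tau_n^2<\dots<\tau_n^{j_n}$ denote the points $\tau\in(0,\tau^* )$ at which $\tau\omega_+(\tau)=\theta(\tau)+2n\pi$. Then (C) has a pair of purely imaginary roots if and only if $\tau=\tau_n^j\in(0,\tau^* )$ for some integer $n\geq0$ and some $j$. At every such $\tau_n^j$, the pair of purely imaginary roots $\pm i\omega_+(\tau_n^j)$ is simple and no other root of (C) is an integer multiple of $i\omega_+(\tau_n^j)$. If, in addition, $\frac{d}{d\tau}(\tau\omega_+(\tau))\big|_{\tau=\tau_n^j}\neq\frac{d}{d\tau}\theta(\tau)\big|_{\tau=\tau_n^j}$,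 then the transversality condition $\frac{d}{d\tau}\operatorname{Re}\lambda(\tau)\big|_{\tau=\tau_n^j}\neq0$ holds for the root branch $\lambda(\tau)$ with $\lambda(\tau_n^j)=i\omega_+(\tau_n^j)$.
   Context: (C) is the characteristic equation of the linearization of the delay system $\dot x=x(1-x)-yx$, $\dot y=-sy+Ye^{-s\tau}y(t-\tau)x(t-\tau)$ at its coexistence equilibrium $E_+=(x_+(\tau),1-x_+(\tau))$, which has positive components for $\tau\in[0,\tau^*]$ when $Y>3s$. The function $\theta$ is well defined and continuously differentiable on $[0,\tau^*]$. *)

theory Defs
  imports "HOL-Analysis.Analysis"
begin

definition xp :: "real \<Rightarrow> real \<Rightarrow> real \<Rightarrow> real" where
  "xp s Y t = s / Y * exp (s * t)"

definition taustar :: "real \<Rightarrow> real \<Rightarrow> real" where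
  "taustar s Y = ln (Y / (3 * s)) / s"

definition pc :: "real \<Rightarrow> real \<Rightarrow> real \<Rightarrow> real" where
  "pc s Y t = s * (1 + exp (s * t) / Y)"

definition qc :: "real \<Rightarrow> real" where
  "qc s = - s"

definition cc :: "real \<Rightarrow> real \<Rightarrow> real \<Rightarrow> real" where
  "cc s Y t = s * (1 - 2 * s * exp (s * t) / Y)"

definition alphac :: "real \<Rightarrow> real \<Rightarrow> real \<Rightarrow> real" where
  "alphac s Y t = s^2 * exp (s * t) / Y"

definition charD :: "real \<Rightarrow> real \<Rightarrow> complex \<Rightarrow> real \<Rightarrow> complex" where
  "charD s Y lam t = lam^2 + of_real (pc s Y t) * lam
     + (of_real (qc s) * lam + of_real (cc s Y t)) * exp (- lam * of_real t)
     + of_real (alphac s Y t)"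

definition omega_p :: "real \<Rightarrow> real \<Rightarrow> real \<Rightarrow> real" where
  "omega_p s Y t = (let x = xp s Y t in
     sqrt ((- (x^2) + sqrt (x^4 + s^2 * (12 * x^2 - 16 * x + 4))) / 2))"

definition h2 :: "real \<Rightarrow> real \<Rightarrow> real \<Rightarrow> real \<Rightarrow> real" where
  "h2 s Y w t = (let x = xp s Y t in
     (w^2 * (1 + s - x) - (1 - 2 * x) * s * x) / (s * ((1 - 2 * x)^2 + w^2)))"

definition theta :: "real \<Rightarrow> real \<Rightarrow> real \<Rightarrow> real" where
  "theta s Y t = arccos (h2 s Y (omega_p s Y t) t)"

definition crit_delays :: "real \<Rightarrow> real \<Rightarrow> real set" where
  "crit_delays s Y = {t \<in> {0<..<taustar s Y}.
     \<exists>n::nat. t * omega_p s Y t = theta s Y t + 2 * real n * pi}"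

end

theory Submission
  imports Defs
begin


lemma lin_approx:
  fixes F F' :: "complex \<Rightarrow> real \<Rightarrow> complex"
  assumes der: "\<And>l t. ((\<lambda>l. F l t) has_field_derivative F' l t) (at l)"
    and bnd: "\<And>l. l \<in> cball a r \<Longrightarrow> cmod (F' l t - d) \<le> B"
    and l: "l \<in> cball a r" and l2: "l2 \<in> cball a r"
  shows "cmod (F l t - F l2 t - d * (l - l2)) \<le> B * cmod (l - l2)"
proof -
  have "norm ((\<lambda>l. F l t - d * l) l - (\<lambda>l. F l t - d * l) l2) \<le> B * norm (l - l2)"
  proof (rule field_differentiable_bound[where S="cball a r" and f'="\<lambda>l. F' l t - d"])
    show "convex (cball a r)" by simp
    fix z assume "z \<in> cball a r"
    show "((\<lambda>l. F l t - d * l) has_field_derivative F' z t - d) (at z within cball a r)"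
      by (rule has_field_derivative_at_within, rule derivative_eq_intros der)+ auto
    show "norm (F' z t - d) \<le> B" using bnd \<open>z \<in> cball a r\<close> by simp
  qed (use l l2 in auto)
  then show ?thesis by (simp add: algebra_simps)
qed

lemma ift_branch:
  fixes F F' :: "complex \<Rightarrow> real \<Rightarrow> complex"
  assumes der: "\<And>l t. ((\<lambda>l. F l t) has_field_derivative F' l t) (at l)"
    and contF': "\<And>\<epsilon>. \<epsilon> > 0 \<Longrightarrow> \<exists>\<delta>>0. \<forall>l t. cmod (l - a) < \<delta> \<longrightarrow> \<bar>t - t0\<bar> < \<delta> \<longrightarrow> cmod (F' l t - F' a t0) < \<epsilon>"
    and contFa: "((\<lambda>t. F a t) \<longlongrightarrow> 0) (at t0)"
    and Fa0: "F a t0 = 0" and d0: "F' a t0 \<noteq> 0"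
  shows "\<exists>lam e. e > 0 \<and> lam t0 = a \<and> (\<forall>t. \<bar>t - t0\<bar> < e \<longrightarrow> F (lam t) t = 0) \<and> isCont lam t0"
proof -
  define d where "d = F' a t0"
  have dpos: "cmod d > 0" using d0 by (simp add: d_def)
  obtain \<delta> where \<delta>: "\<delta> > 0" and h\<delta>: "\<And>l t. cmod (l - a) < \<delta> \<Longrightarrow> \<bar>t - t0\<bar> < \<delta> \<Longrightarrow> cmod (F' l t - d) < cmod d / 2"
    using contF'[of "cmod d / 2"] dpos unfolding d_def by auto
  define r where "r = \<delta> / 2"
  have r: "r > 0" "r < \<delta>" using \<delta> by (auto simp: r_def)
  have bnd: "cmod (F' l t - d) \<le> cmod d / 2" if "l \<in> cball a r" "\<bar>t - t0\<bar> < \<delta>" for l t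
  proof -
    have "cmod (l - a) < \<delta>" using that r by (simp add: dist_norm norm_minus_commute)
    then show ?thesis using h\<delta> that by fastforce
  qed
  have lip: "cmod (F l1 t - F l2 t - d * (l1 - l2)) \<le> cmod d / 2 * cmod (l1 - l2)"
    if "l1 \<in> cball a r" "l2 \<in> cball a r" "\<bar>t - t0\<bar> < \<delta>" for l1 l2 t
    by (rule lin_approx[OF der, where a=a and r=r]) (use bnd that in auto)
  have uniq: "l1 = l2" if "l1 \<in> cball a r" "l2 \<in> cball a r" "\<bar>t - t0\<bar> < \<delta>"
      "F l1 t = 0" "F l2 t = 0" for l1 l2 t
  proof -
    have "cmod d * cmod (l1 - l2) \<le> cmod d / 2 * cmod (l1 - l2)"
      using lip[OF that(1-3)] that(4,5) by (simp add: norm_mult norm_minus_commute)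
    then have "(cmod d / 2) * cmod (l1 - l2) \<le> 0" by (simp add: algebra_simps)
    then have "cmod (l1 - l2) \<le> 0" using dpos by (simp add: mult_le_0_iff)
    then show ?thesis by simp
  qed
  have exist: "\<exists>l \<in> cball a \<rho>. F l t = 0"
    if "\<bar>t - t0\<bar> < \<delta>" "0 < \<rho>" "\<rho> \<le> r" "cmod (F a t) \<le> cmod d * \<rho> / 2" for t \<rho>
  proof -
    define g where "g l = l - F l t / d" for l
    have sub: "cball a \<rho> \<subseteq> cball a r" using that by auto
    have glip: "dist (g l1) (g l2) \<le> 1/2 * dist l1 l2" if "l1 \<in> cball a \<rho>" "l2 \<in> cball a \<rho>" for l1 l2
    proof -
      have "g l1 - g l2 = - (F l1 t - F l2 t - d * (l1 - l2)) / d"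
        using dpos by (simp add: g_def field_simps)
      then have "dist (g l1) (g l2) = cmod (F l1 t - F l2 t - d * (l1 - l2)) / cmod d"
        by (simp only: dist_norm norm_divide norm_minus_cancel)
      also have "\<dots> \<le> (cmod d / 2 * cmod (l1 - l2)) / cmod d"
      proof (intro divide_right_mono)
        have "l1 \<in> cball a r" "l2 \<in> cball a r" using sub that by auto
        then show "cmod (F l1 t - F l2 t - d * (l1 - l2)) \<le> cmod d / 2 * cmod (l1 - l2)"
          using lip[of l1 l2 t] \<open>\<bar>t - t0\<bar> < \<delta>\<close> by blast
      qed simp
      also have "\<dots> = 1/2 * dist l1 l2" using dpos by (simp add: dist_norm)
      finally show ?thesis .
    qed
    have maps: "g ` cball a \<rho> \<subseteq> cball a \<rho>"
    proof
      fix y assume "y \<in> g ` cball a \<rho>"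
      then obtain l where l: "l \<in> cball a \<rho>" "y = g l" by auto
      have "dist a (g l) \<le> dist a (g a) + dist (g a) (g l)" by (rule dist_triangle)
      also have "dist a (g a) = cmod (F a t) / cmod d" by (simp add: g_def dist_norm norm_divide)
      also have "\<dots> \<le> \<rho> / 2" using that(4) dpos by (simp add: divide_le_eq mult.commute)
      also have "dist (g a) (g l) \<le> 1/2 * dist a l" using glip l that by auto
      also have "\<dots> \<le> \<rho> / 2" using l by simp
      finally show "y \<in> cball a \<rho>" using l by simp
    qed
    have "\<exists>!x\<in>cball a \<rho>. g x = x"
      by (rule Banach_fix[where c="1/2"]) (use that maps glip in \<open>auto intro: compact_imp_complete\<close>)
    then obtain l where "l \<in> cball a \<rho>" "g l = l" by auto
    then have "F l t = 0" using dpos by (simp add: g_def)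
    then show ?thesis using \<open>l \<in> cball a \<rho>\<close> by auto
  qed
  have evF: "\<exists>\<eta>>0. \<forall>t. \<bar>t - t0\<bar> < \<eta> \<longrightarrow> cmod (F a t) \<le> cmod d * \<rho> / 2" if "\<rho> > 0" for \<rho>
  proof -
    have "cmod d * \<rho> / 2 > 0" using that dpos by simp
    then obtain \<eta> where "\<eta> > 0" "\<And>t. t \<noteq> t0 \<Longrightarrow> norm (t - t0) < \<eta> \<Longrightarrow> norm (F a t - 0) < cmod d * \<rho> / 2"
      using contFa unfolding LIM_eq by blast
    moreover have "cmod (F a t) \<le> cmod d * \<rho> / 2" if "\<bar>t - t0\<bar> < \<eta>" for t
    proof (cases "t = t0")
      case True then show ?thesis using Fa0 dpos \<open>\<rho> > 0\<close> by simp
    next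
      case False then show ?thesis using calculation that by (auto intro: less_imp_le)
    qed
    ultimately show ?thesis by blast
  qed
  obtain \<delta>2 where \<delta>2: "\<delta>2 > 0" "\<And>t. \<bar>t - t0\<bar> < \<delta>2 \<Longrightarrow> cmod (F a t) \<le> cmod d * r / 2"
    using evF[OF r(1)] by blast
  define e where "e = min \<delta> \<delta>2"
  define lam where "lam t = (SOME l. l \<in> cball a r \<and> F l t = 0)" for t
  have lamt: "lam t \<in> cball a r \<and> F (lam t) t = 0" if "\<bar>t - t0\<bar> < e" for t
  proof -
    have "\<exists>l. l \<in> cball a r \<and> F l t = 0"
      using exist[of t r] that r \<delta>2 by (auto simp: e_def)
    then show ?thesis unfolding lam_def by (rule someI_ex)
  qed
  have e: "e > 0" using \<delta> \<delta>2 by (simp add: e_def)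
  have lam0: "lam t0 = a"
    using uniq[of "lam t0" a t0] lamt[of t0] e \<delta> Fa0 r by auto
  have "isCont lam t0"
    unfolding continuous_at_eps_delta
  proof (intro allI impI)
    fix \<epsilon> :: real assume "\<epsilon> > 0"
    define \<rho> where "\<rho> = min (\<epsilon>/2) r"
    have \<rho>: "\<rho> > 0" "\<rho> \<le> r" "\<rho> < \<epsilon>" using \<open>\<epsilon> > 0\<close> r by (auto simp: \<rho>_def)
    obtain \<eta> where \<eta>: "\<eta> > 0" "\<And>t. \<bar>t - t0\<bar> < \<eta> \<Longrightarrow> cmod (F a t) \<le> cmod d * \<rho> / 2"
      using evF[OF \<rho>(1)] by blast
    show "\<exists>\<delta>>0. \<forall>x'. dist x' t0 < \<delta> \<longrightarrow> dist (lam x') (lam t0) < \<epsilon>"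
    proof (intro exI[of _ "min \<eta> e"] conjI allI impI)
      show "min \<eta> e > 0" using \<eta> e by simp
      fix t assume "dist t t0 < min \<eta> e"
      then have t: "\<bar>t - t0\<bar> < \<eta>" "\<bar>t - t0\<bar> < e" by (auto simp: dist_real_def)
      then have "\<bar>t - t0\<bar> < \<delta>" by (simp add: e_def)
      obtain l where l: "l \<in> cball a \<rho>" "F l t = 0" using exist[of t \<rho>] \<rho> \<eta> t \<open>\<bar>t - t0\<bar> < \<delta>\<close> by blast
      have "l = lam t" using uniq[of l "lam t" t] l lamt[OF t(2)] \<rho> \<open>\<bar>t - t0\<bar> < \<delta>\<close> by auto
      then show "dist (lam t) (lam t0) < \<epsilon>" using l \<rho> lam0 by (simp add: dist_commute)
    qed
  qed
  then show ?thesis using e lam0 lamt by blast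
qed

lemma ift_deriv:
  fixes F F' :: "complex \<Rightarrow> real \<Rightarrow> complex"
  assumes der: "\<And>l t. ((\<lambda>l. F l t) has_field_derivative F' l t) (at l)"
    and contF': "\<And>\<epsilon>. \<epsilon> > 0 \<Longrightarrow> \<exists>\<delta>>0. \<forall>l t. cmod (l - a) < \<delta> \<longrightarrow> \<bar>t - t0\<bar> < \<delta> \<longrightarrow> cmod (F' l t - F' a t0) < \<epsilon>"
    and derFa: "((\<lambda>t. F a t) has_vector_derivative Ft) (at t0)"
    and d0: "F' a t0 \<noteq> 0"
    and lam0: "lam t0 = a" and e: "e > 0" and zero: "\<forall>t. \<bar>t - t0\<bar> < e \<longrightarrow> F (lam t) t = 0"
    and cont: "isCont lam t0"
  shows "(lam has_vector_derivative (- Ft / F' a t0)) (at t0)"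
proof -
  define d where "d = F' a t0"
  define L where "L = - Ft / d"
  define \<kappa> where "\<kappa> = cmod d"
  have \<kappa>: "\<kappa> > 0" using d0 by (simp add: \<kappa>_def d_def)
  have Fa0: "F a t0 = 0" using zero e lam0 by force
  have "(lam has_derivative (\<lambda>h. h *\<^sub>R L)) (at t0)"
    unfolding has_derivative_at_alt
  proof (intro conjI allI impI)
    show "bounded_linear (\<lambda>h. h *\<^sub>R L)" by (rule bounded_linear_scaleR_left)
    fix \<epsilon> :: real assume "\<epsilon> > 0"
    define \<epsilon>1 where "\<epsilon>1 = \<epsilon> * \<kappa> / 4"
    define \<epsilon>2 where "\<epsilon>2 = min (\<kappa>/2) (\<epsilon> * \<kappa> / (4 * (1 + cmod L)))"
    have \<epsilon>1: "\<epsilon>1 > 0" using \<open>\<epsilon> > 0\<close> \<kappa> by (simp add: \<epsilon>1_def)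
    have pL: "4 * (1 + cmod L) > 0" by (simp add: add_pos_nonneg)
    have \<epsilon>2b: "\<epsilon>2 \<le> \<kappa>/2" unfolding \<epsilon>2_def by (rule min.cobounded1)
    have "\<epsilon> * \<kappa> / (4 * (1 + cmod L)) > 0" using \<open>\<epsilon> > 0\<close> \<kappa> pL by simp
    then have \<epsilon>2a: "\<epsilon>2 > 0"
      using \<kappa> unfolding \<epsilon>2_def by (simp add: min_def)
    note \<epsilon>2a = \<epsilon>2a \<epsilon>2b
    have "\<epsilon>2 \<le> \<epsilon> * \<kappa> / (4 * (1 + cmod L))" by (simp add: \<epsilon>2_def)
    then have "\<epsilon>2 * (4 * (1 + cmod L)) \<le> \<epsilon> * \<kappa>" using pL by (simp add: pos_le_divide_eq)
    then have "\<epsilon>2 * (1 + cmod L) \<le> \<epsilon> * \<kappa> / 4" by (simp add: algebra_simps)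
    note \<epsilon>2 = \<epsilon>2a this
    obtain \<delta>1 where \<delta>1: "\<delta>1 > 0" "\<And>l t. cmod (l - a) < \<delta>1 \<Longrightarrow> \<bar>t - t0\<bar> < \<delta>1 \<Longrightarrow> cmod (F' l t - d) < \<epsilon>2"
      using contF'[OF \<epsilon>2(1)] unfolding d_def by blast
    obtain \<eta>1 where \<eta>1: "\<eta>1 > 0" "\<And>t. dist t t0 < \<eta>1 \<Longrightarrow> dist (lam t) (lam t0) < \<delta>1 / 2"
      using cont \<delta>1 unfolding continuous_at_eps_delta by (meson half_gt_zero)
    obtain \<eta>2 where \<eta>2: "\<eta>2 > 0" "\<And>t. norm (t - t0) < \<eta>2 \<Longrightarrow>
        norm (F a t - F a t0 - (t - t0) *\<^sub>R Ft) \<le> \<epsilon>1 * norm (t - t0)"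
      using derFa \<epsilon>1 unfolding has_vector_derivative_def has_derivative_at_alt by blast
    define \<eta> where "\<eta> = min (min e \<delta>1) (min \<eta>1 \<eta>2)"
    show "\<exists>\<delta>>0. \<forall>y. norm (y - t0) < \<delta> \<longrightarrow> norm (lam y - lam t0 - (y - t0) *\<^sub>R L) \<le> \<epsilon> * norm (y - t0)"
    proof (intro exI[of _ \<eta>] conjI allI impI)
      show "\<eta> > 0" using e \<delta>1 \<eta>1 \<eta>2 by (simp add: \<eta>_def)
      fix t assume "norm (t - t0) < \<eta>"
      then have t: "\<bar>t - t0\<bar> < e" "\<bar>t - t0\<bar> < \<delta>1" "dist t t0 < \<eta>1" "norm (t - t0) < \<eta>2"
        by (auto simp: \<eta>_def dist_real_def)
      define h where "h = \<bar>t - t0\<bar>"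
      define X where "X = cmod (lam t - a - (t - t0) *\<^sub>R L)"
      have lt: "lam t \<in> cball a (\<delta>1/2)" using \<eta>1(2)[OF t(3)] lam0 by (simp add: dist_commute)
      have bnd: "cmod (F' l t - d) \<le> \<epsilon>2" if "l \<in> cball a (\<delta>1/2)" for l
      proof -
        have "cmod (l - a) < \<delta>1" using that \<delta>1 by (simp add: dist_norm norm_minus_commute)
        then show ?thesis using \<delta>1(2)[of l t] t(2) by simp
      qed
      define R where "R = F (lam t) t - F a t - d * (lam t - a)"
      have R: "cmod R \<le> \<epsilon>2 * cmod (lam t - a)"
        unfolding R_def by (rule lin_approx[OF der, where a=a and r="\<delta>1/2"]) (use bnd lt \<delta>1 in auto)
      define A where "A = F a t - F a t0 - (t - t0) *\<^sub>R Ft"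
      have A: "cmod A \<le> \<epsilon>1 * h" using \<eta>2(2)[OF t(4)] by (simp add: A_def h_def)
      have Flt: "F (lam t) t = 0" using zero t(1) by blast
      have key: "d * (lam t - a - (t - t0) *\<^sub>R L) = - A - R"
        using Flt Fa0 \<kappa> unfolding A_def R_def L_def \<kappa>_def
        by (simp add: scaleR_conv_of_real field_simps)
      have "\<kappa> * X = cmod (- A - R)" unfolding X_def \<kappa>_def key[symmetric] by (simp add: norm_mult)
      also have "\<dots> \<le> cmod A + cmod R" by (metis norm_diff_ineq norm_minus_cancel norm_triangle_ineq4)
      finally have 1: "\<kappa> * X \<le> cmod A + cmod R" .
      have "cmod (lam t - a) \<le> X + h * cmod L"
      proof -
        have "cmod (lam t - a) \<le> X + cmod ((t - t0) *\<^sub>R L)" unfolding X_def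
          by (metis diff_add_cancel norm_triangle_ineq)
        then show ?thesis by (simp add: h_def)
      qed
      then have "cmod R \<le> \<epsilon>2 * X + \<epsilon>2 * (h * cmod L)"
        using R \<epsilon>2(1) by (smt (verit) distrib_left mult_left_mono)
      then have "\<kappa> * X \<le> \<epsilon>1 * h + \<epsilon>2 * X + \<epsilon>2 * (h * cmod L)" using 1 A by linarith
      moreover have "\<epsilon>2 * X \<le> \<kappa> / 2 * X" using \<epsilon>2 by (intro mult_right_mono) (auto simp: X_def)
      moreover have "\<epsilon>2 * (h * cmod L) \<le> \<epsilon> * \<kappa> / 4 * h"
      proof -
        have "\<epsilon>2 * (h * cmod L) \<le> \<epsilon>2 * (1 + cmod L) * h" using \<epsilon>2(1)
          by (simp add: algebra_simps h_def)
        also have "\<dots> \<le> \<epsilon> * \<kappa> / 4 * h" using \<epsilon>2(3) by (intro mult_right_mono) (auto simp: h_def)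
        finally show ?thesis .
      qed
      ultimately have "\<kappa> / 2 * X \<le> \<kappa> / 2 * (\<epsilon> * h)" by (simp add: \<epsilon>1_def algebra_simps)
      then have "X \<le> \<epsilon> * h" using \<kappa> by simp
      then show "norm (lam t - lam t0 - (t - t0) *\<^sub>R L) \<le> \<epsilon> * norm (t - t0)"
        by (simp add: X_def lam0 h_def)
    qed
  qed
  then show ?thesis by (simp add: has_vector_derivative_def L_def d_def)
qed



lemma coef:
  "pc s Y t = s + xp s Y t" "cc s Y t = s * (1 - 2 * xp s Y t)"
  "alphac s Y t = s * xp s Y t" "qc s = - s"
  by (simp_all add: pc_def cc_def alphac_def qc_def xp_def algebra_simps power2_eq_square)

lemma xrange:
  assumes s: "s > 0" and Y: "Y > 3 * s" and t: "t \<in> {0<..<taustar s Y}"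
  shows "0 < xp s Y t" "xp s Y t < 1/3"
proof -
  have Yp: "Y > 0" using s Y by simp
  show "0 < xp s Y t" using s Yp by (simp add: xp_def)
  have "t < ln (Y / (3 * s)) / s" using t by (simp add: taustar_def)
  then have "s * t < ln (Y / (3 * s))" using s by (simp add: field_simps)
  then have "exp (s * t) < Y / (3 * s)" using s Yp
    by (metis divide_pos_pos exp_less_cancel_iff exp_ln mult_pos_pos zero_less_numeral)
  then show "xp s Y t < 1/3" using s Yp by (simp add: xp_def field_simps)
qed

lemma exp_imag: "exp (- (\<i> * complex_of_real w) * complex_of_real t) = Complex (cos (w * t)) (- sin (w * t))"
proof -
  have "exp (- (\<i> * complex_of_real w) * complex_of_real t) = exp (\<i> * complex_of_real (- (w * t)))"
    by (rule arg_cong[where f=exp]) simp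
  also have "\<dots> = cis (- (w * t))" by (simp add: cis_conv_exp)
  finally show ?thesis by (simp add: complex_eq_iff)
qed

lemma charD_iw:
  "charD s Y (\<i> * complex_of_real w) t =
     Complex (- (w^2) + s * xp s Y t + s * (1 - 2 * xp s Y t) * cos (w * t) - s * w * sin (w * t))
             ((s + xp s Y t) * w - s * w * cos (w * t) - s * (1 - 2 * xp s Y t) * sin (w * t))"
  unfolding charD_def exp_imag coef[symmetric]
  by (simp add: complex_eq_iff coef power2_eq_square algebra_simps)

lemma Wfacts:
  fixes s x :: real
  assumes s: "s > 0" and x: "0 < x" "x < 1/3"
  defines "W \<equiv> (- (x^2) + sqrt (x^4 + s^2 * (12 * x^2 - 16 * x + 4))) / 2"
  shows "W > 0" "W^2 + x^2 * W = s^2 * (1 - 3*x) * (1 - x)"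
    "W < s * (1 - x) + x * (1 - 2 * x)"
    "\<And>u. u \<ge> 0 \<Longrightarrow> u^2 + x^2 * u = s^2 * (1 - 3*x) * (1 - x) \<Longrightarrow> u = W"
proof -
  define r where "r = sqrt (x^4 + s^2 * (12 * x^2 - 16 * x + 4))"
  have pos: "s^2 * (1 - 3*x) * (1 - x) > 0" using s x by simp
  have D: "x^4 + s^2 * (12 * x^2 - 16 * x + 4) = x^4 + 4 * (s^2 * (1 - 3*x) * (1 - x))"
    by (simp add: algebra_simps power2_eq_square)
  have r2: "r^2 = x^4 + 4 * (s^2 * (1 - 3*x) * (1 - x))"
  proof -
    have "0 \<le> x^4 + 4 * (s^2 * (1 - 3*x) * (1 - x))" using pos by (simp add: add_nonneg_nonneg)
    then have nn: "0 \<le> x^4 + s^2 * (12 * x^2 - 16 * x + 4)" using D by linarith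
    then have "r^2 = x^4 + s^2 * (12 * x^2 - 16 * x + 4)" unfolding r_def by (metis real_sqrt_pow2)
    then show ?thesis using D by linarith
  qed
  have nn: "0 \<le> x^4 + s^2 * (12 * x^2 - 16 * x + 4)"
  proof -
    have "0 \<le> x^4 + 4 * (s^2 * (1 - 3*x) * (1 - x))" using pos by (simp add: add_nonneg_nonneg)
    then show ?thesis using D by linarith
  qed
  have "r > x^2"
  proof -
    have "(x^2)^2 < r^2" using r2 pos by (simp add: power_mult[symmetric])
    moreover have "r \<ge> 0" using nn by (simp add: r_def)
    ultimately show ?thesis by (meson abs_le_square_iff abs_of_nonneg not_le power2_less_imp_less)
  qed
  have Wr: "W = (r - x^2) / 2" by (simp add: W_def r_def)
  show W0: "W > 0" using \<open>r > x^2\<close> Wr by simp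
  show Weq: "W^2 + x^2 * W = s^2 * (1 - 3*x) * (1 - x)"
  proof -
    have "W^2 + x^2 * W = (r^2 - (x^2)^2) / 4" unfolding Wr by (simp add: field_simps power2_eq_square)
    then show ?thesis using r2 by (simp add: power_mult[symmetric])
  qed
  have uniq: "u = W" if "u \<ge> 0" "u^2 + x^2 * u = s^2 * (1 - 3*x) * (1 - x)" for u
  proof -
    have "(u - W) * (u + W + x^2) = 0" using that(2) Weq by (simp add: algebra_simps power2_eq_square)
    moreover have "u + W + x^2 > 0" using that(1) W0 by (simp add: add_nonneg_pos add_pos_nonneg)
    ultimately show ?thesis by simp
  qed
  then show "\<And>u. u \<ge> 0 \<Longrightarrow> u^2 + x^2 * u = s^2 * (1 - 3*x) * (1 - x) \<Longrightarrow> u = W" by blast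
  show "W < s * (1 - x) + x * (1 - 2 * x)"
  proof (rule ccontr)
    define K where "K = s * (1 - x) + x * (1 - 2 * x)"
    assume "\<not> W < s * (1 - x) + x * (1 - 2 * x)"
    then have WK: "W \<ge> K" by (simp add: K_def)
    have K0: "K > s * (1 - x)" using x by (simp add: K_def)
    have sx: "s * (1 - x) > 0" using s x by simp
    have a: "K^2 \<ge> (s * (1 - x))^2" using K0 sx by (intro power_mono) auto
    have b: "(s * (1 - x))^2 > s^2 * (1 - 3*x) * (1 - x)" using s x
      by (simp add: power2_eq_square algebra_simps)
    have "K^2 > s^2 * (1 - 3*x) * (1 - x)" using a b by linarith
    moreover have "W^2 \<ge> K^2" using WK K0 sx by (intro power_mono) auto
    moreover have "x^2 * W \<ge> 0" using W0 by simp
    ultimately show False using Weq by linarith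
  qed
qed

lemma theta_props:
  assumes s: "s > 0" and Y: "Y > 3 * s" and t: "t \<in> {0<..<taustar s Y}"
  defines "x \<equiv> xp s Y t" and "\<omega> \<equiv> omega_p s Y t" and "\<theta> \<equiv> theta s Y t"
  shows "\<omega> > 0"
    "- (\<omega>^2) + s * x + s * (1 - 2 * x) * cos \<theta> - s * \<omega> * sin \<theta> = 0"
    "(s + x) * \<omega> - s * \<omega> * cos \<theta> - s * (1 - 2 * x) * sin \<theta> = 0"
    "sin \<theta> > 0" "- 1 < h2 s Y \<omega> t" "h2 s Y \<omega> t < 1"
    "(\<omega>^2)^2 + x^2 * \<omega>^2 = s^2 * (1 - 3*x) * (1 - x)"
    "\<And>u. u \<ge> 0 \<Longrightarrow> u^2 + x^2 * u = s^2 * (1 - 3*x) * (1 - x) \<Longrightarrow> u = \<omega>^2"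
proof -
  have x: "0 < x" "x < 1/3" using xrange[OF s Y t] by (auto simp: x_def)
  define W where "W = (- (x^2) + sqrt (x^4 + s^2 * (12 * x^2 - 16 * x + 4))) / 2"
  note WF = Wfacts[OF s x, folded W_def]
  have \<omega>W: "\<omega> = sqrt W" by (simp add: \<omega>_def omega_p_def W_def x_def Let_def)
  show \<omega>0: "\<omega> > 0" using WF(1) \<omega>W by simp
  have W2: "\<omega>^2 = W" using WF(1) \<omega>W by simp
  show quart: "(\<omega>^2)^2 + x^2 * \<omega>^2 = s^2 * (1 - 3*x) * (1 - x)" using WF(2) W2 by simp
  show "\<And>u. u \<ge> 0 \<Longrightarrow> u^2 + x^2 * u = s^2 * (1 - 3*x) * (1 - x) \<Longrightarrow> u = \<omega>^2"
    using WF(4) W2 by simp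
  define c where "c = s * (1 - 2 * x)"
  define p where "p = s + x"
  define A where "A = W - s * x"
  define den where "den = c^2 + s^2 * W"
  have c0: "c > 0" using s x by (simp add: c_def)
  have den0: "den > 0" using c0 s WF(1) by (simp add: den_def add_pos_pos)
  define Cw where "Cw = (c * A + s * p * W) / den"
  define Sw where "Sw = \<omega> * (c * p - s * A) / den"
  have h2C: "h2 s Y \<omega> t = Cw"
  proof -
    have "h2 s Y \<omega> t = (W * (1 + s - x) - (1 - 2 * x) * s * x) / (s * ((1 - 2 * x)^2 + W))"
      by (simp add: h2_def x_def[symmetric] W2 Let_def)
    also have "\<dots> = Cw"
    proof -
      have n: "c * A + s * p * W = s * (W * (1 + s - x) - (1 - 2 * x) * s * x)"
        unfolding c_def A_def p_def by (simp add: algebra_simps)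
      have d: "den = s * (s * ((1 - 2 * x)^2 + W))"
        unfolding den_def c_def by (simp add: algebra_simps power2_eq_square)
      show ?thesis unfolding Cw_def n d using s by simp
    qed
    finally show ?thesis .
  qed
  have key: "A^2 + p^2 * W = c^2 + s^2 * W"
    using WF(2) unfolding A_def p_def c_def by (simp add: algebra_simps power2_eq_square)
  have id1: "(c * A + s * p * W)^2 + W * (c * p - s * A)^2 = (c^2 + s^2 * W) * (A^2 + p^2 * W)"
    by (simp add: algebra_simps power2_eq_square)
  have CS: "Cw^2 + Sw^2 = 1"
  proof -
    have "Cw^2 + Sw^2 = ((c * A + s * p * W)^2 + W * (c * p - s * A)^2) / den^2"
      unfolding Cw_def Sw_def by (simp only: power_divide power_mult_distrib W2 add_divide_distrib[symmetric])
    also have "\<dots> = 1" unfolding id1 key using den0 by (simp add: den_def power2_eq_square)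
    finally show ?thesis .
  qed
  have Sw0: "Sw > 0"
  proof -
    have "c * p - s * A = s * ((s * (1 - x) + x * (1 - 2 * x)) - W)"
      unfolding c_def p_def A_def by (simp add: algebra_simps)
    also have "\<dots> > 0" using s WF(3) by simp
    finally show ?thesis unfolding Sw_def using \<omega>0 den0 by simp
  qed
  have Cw1: "Cw^2 < 1" using CS Sw0 by (smt (verit) zero_less_power)
  then have "\<bar>Cw\<bar> < 1" by (simp add: abs_square_less_1)
  then have Cwb: "-1 < Cw" "Cw < 1" by auto
  then show "- 1 < h2 s Y \<omega> t" "h2 s Y \<omega> t < 1" using h2C by auto
  have \<theta>C: "\<theta> = arccos Cw" using h2C by (simp add: \<theta>_def theta_def \<omega>_def)
  have cos\<theta>: "cos \<theta> = Cw" unfolding \<theta>C using Cwb by simp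
  have sin\<theta>: "sin \<theta> = Sw"
  proof -
    have "sin \<theta> = sqrt (1 - Cw^2)" unfolding \<theta>C using Cwb by (simp add: sin_arccos)
    also have "1 - Cw^2 = Sw^2" using CS by simp
    finally show ?thesis using Sw0 by simp
  qed
  show "sin \<theta> > 0" using Sw0 sin\<theta> by simp
  have ww: "\<omega> * \<omega> = W" using W2 by (simp add: power2_eq_square)
  have "den * (c * Cw - s * \<omega> * Sw) = c * (c * A + s * p * W) - s * (\<omega> * \<omega>) * (c * p - s * A)"
    unfolding Cw_def Sw_def using den0 by (simp add: field_simps)
  also have "\<dots> = den * A" unfolding ww den_def by (simp add: algebra_simps power2_eq_square)
  finally have e1: "c * Cw - s * \<omega> * Sw = A" using den0 by simp
  have "den * (s * \<omega> * Cw + c * Sw) = \<omega> * (s * (c * A + s * p * W) + c * (c * p - s * A))"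
    unfolding Cw_def Sw_def using den0 by (simp add: field_simps)
  also have "\<dots> = den * (p * \<omega>)" unfolding den_def by (simp add: algebra_simps power2_eq_square)
  finally have e2: "s * \<omega> * Cw + c * Sw = p * \<omega>" using den0 by simp
  show "- (\<omega>^2) + s * x + s * (1 - 2 * x) * cos \<theta> - s * \<omega> * sin \<theta> = 0"
    using e1 W2 unfolding cos\<theta> sin\<theta> c_def A_def by simp
  show "(s + x) * \<omega> - s * \<omega> * cos \<theta> - s * (1 - 2 * x) * sin \<theta> = 0"
    using e2 unfolding cos\<theta> sin\<theta> c_def p_def by (simp add: algebra_simps)
qed

lemma linsys_uniq:
  fixes c a C S C' S' :: real
  assumes "c^2 + a^2 > 0"
    and "c * C - a * S = c * C' - a * S'" and "a * C + c * S = a * C' + c * S'"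
  shows "C = C'" "S = S'"
proof -
  have e1: "c * (C - C') - a * (S - S') = 0" and e2: "a * (C - C') + c * (S - S') = 0"
    using assms by (simp_all add: algebra_simps)
  have "(c^2 + a^2) * (C - C') = c * (c * (C - C') - a * (S - S')) + a * (a * (C - C') + c * (S - S'))"
    by (simp add: algebra_simps power2_eq_square)
  then have "(c^2 + a^2) * (C - C') = 0" using e1 e2 by simp
  then show "C = C'" using assms(1) by auto
  have "(c^2 + a^2) * (S - S') = c * (a * (C - C') + c * (S - S')) - a * (c * (C - C') - a * (S - S'))"
    by (simp add: algebra_simps power2_eq_square)
  then have "(c^2 + a^2) * (S - S') = 0" using e1 e2 by simp
  then show "S = S'" using assms(1) by auto
qed

lemma root_char:
  assumes s: "s > 0" and Y: "Y > 3 * s" and t: "t \<in> {0<..<taustar s Y}"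
    and root: "charD s Y (\<i> * complex_of_real w) t = 0"
  shows "w^2 = (omega_p s Y t)^2"
    "w > 0 \<Longrightarrow> w = omega_p s Y t \<and> cos (w * t) = cos (theta s Y t) \<and> sin (w * t) = sin (theta s Y t)"
proof -
  define x where "x = xp s Y t"
  define \<omega> where "\<omega> = omega_p s Y t"
  define \<theta> where "\<theta> = theta s Y t"
  define C where "C = cos (w * t)"
  define S where "S = sin (w * t)"
  define c where "c = s * (1 - 2 * x)"
  note TP = theta_props[OF s Y t, folded x_def \<omega>_def \<theta>_def]
  have x: "0 < x" "x < 1/3" using xrange[OF s Y t] by (auto simp: x_def)
  have E1: "- (w^2) + s * x + c * C - s * w * S = 0" and E2: "(s + x) * w - s * w * C - c * S = 0"
    using root unfolding charD_iw complex_eq_iff by (simp_all add: x_def C_def S_def c_def)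
  have CS1: "C^2 + S^2 = 1" by (simp add: C_def S_def)
  have "(c * C - s * w * S)^2 + (s * w * C + c * S)^2 = (c^2 + s^2 * w^2) * (C^2 + S^2)"
    by (simp add: algebra_simps power2_eq_square)
  also have "\<dots> = c^2 + s^2 * w^2" using CS1 by simp
  finally have "(w^2 - s * x)^2 + ((s + x) * w)^2 = c^2 + s^2 * w^2"
  proof -
    assume h: "(c * C - s * w * S)^2 + (s * w * C + c * S)^2 = c^2 + s^2 * w^2"
    have "c * C - s * w * S = w^2 - s * x" using E1 by simp
    moreover have "s * w * C + c * S = (s + x) * w" using E2 by simp
    ultimately show ?thesis using h by simp
  qed
  then have "(w^2)^2 + x^2 * w^2 = s^2 * (1 - 3*x) * (1 - x)"
    unfolding c_def by (simp add: algebra_simps power2_eq_square)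
  then show w2: "w^2 = \<omega>^2" using TP(8)[of "w^2"] by simp
  assume "w > 0"
  then have w\<omega>: "w = \<omega>" using w2 TP(1) by (metis less_eq_real_def power2_eq_iff_nonneg)
  have den: "c^2 + (s * \<omega>)^2 > 0" using s TP(1) by (simp add: add_nonneg_pos)
  have "c * C - (s * \<omega>) * S = c * cos \<theta> - (s * \<omega>) * sin \<theta>"
    using E1 TP(2) w\<omega> unfolding c_def by (simp add: algebra_simps)
  moreover have "(s * \<omega>) * C + c * S = (s * \<omega>) * cos \<theta> + c * sin \<theta>"
    using E2 TP(3) w\<omega> unfolding c_def by (simp add: algebra_simps)
  ultimately have "C = cos \<theta>" "S = sin \<theta>" using linsys_uniq[OF den] by blast+
  then show "w = omega_p s Y t \<and> cos (w * t) = cos (theta s Y t) \<and> sin (w * t) = sin (theta s Y t)"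
    using w\<omega> by (simp add: C_def S_def \<omega>_def \<theta>_def)
qed

lemma charD_neg: "charD s Y (- \<i> * complex_of_real w) t = charD s Y (\<i> * complex_of_real (- w)) t"
  by simp

lemma crit_cos_sin:
  assumes "t \<in> crit_delays s Y"
  shows "cos (omega_p s Y t * t) = cos (theta s Y t)" "sin (omega_p s Y t * t) = sin (theta s Y t)"
proof -
  obtain n :: nat where n: "t * omega_p s Y t = theta s Y t + 2 * real n * pi"
    using assms by (auto simp: crit_delays_def)
  have "omega_p s Y t * t = theta s Y t + 2 * pi * real_of_int (int n)" using n by (simp add: algebra_simps)
  then have "sin (omega_p s Y t * t) = sin (theta s Y t) \<and> cos (omega_p s Y t * t) = cos (theta s Y t)"
    using sin_cos_eq_iff by blast
  then show "cos (omega_p s Y t * t) = cos (theta s Y t)" "sin (omega_p s Y t * t) = sin (theta s Y t)" by auto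
qed

lemma crit_root:
  assumes s: "s > 0" and Y: "Y > 3 * s" and t: "t \<in> crit_delays s Y"
  shows "charD s Y (\<i> * complex_of_real (omega_p s Y t)) t = 0"
    "charD s Y (- \<i> * complex_of_real (omega_p s Y t)) t = 0"
proof -
  have t': "t \<in> {0<..<taustar s Y}" using t by (simp add: crit_delays_def)
  note TP = theta_props[OF s Y t']
  note cs = crit_cos_sin[OF t]
  show "charD s Y (\<i> * complex_of_real (omega_p s Y t)) t = 0"
    unfolding charD_iw complex_eq_iff using TP(2,3) cs by (simp add: mult.commute)
  show "charD s Y (- \<i> * complex_of_real (omega_p s Y t)) t = 0"
    unfolding charD_neg charD_iw complex_eq_iff using TP(2,3) cs by (simp add: mult.commute algebra_simps)
qed

lemma part1:
  assumes s: "s > 0" and Y: "Y > 3 * s" and t: "t \<in> {0<..<taustar s Y}"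
  shows "(\<exists>w::real. w > 0 \<and> charD s Y (\<i> * of_real w) t = 0 \<and> charD s Y (- \<i> * of_real w) t = 0)
        \<longleftrightarrow> t \<in> crit_delays s Y"
proof
  assume "t \<in> crit_delays s Y"
  then show "\<exists>w::real. w > 0 \<and> charD s Y (\<i> * of_real w) t = 0 \<and> charD s Y (- \<i> * of_real w) t = 0"
    using crit_root[OF s Y] theta_props(1)[OF s Y t] by blast
next
  assume "\<exists>w::real. w > 0 \<and> charD s Y (\<i> * of_real w) t = 0 \<and> charD s Y (- \<i> * of_real w) t = 0"
  then obtain w where w: "w > 0" "charD s Y (\<i> * of_real w) t = 0" by blast
  note rc = root_char(2)[OF s Y t w(2) w(1)]
  have "sin (w * t) = sin (theta s Y t) \<and> cos (w * t) = cos (theta s Y t)" using rc by blast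
  then obtain n :: int where n: "w * t = theta s Y t + 2 * pi * n" using sin_cos_eq_iff by blast
  have "w * t > 0" using w t by simp
  moreover have "theta s Y t \<le> pi" unfolding theta_def
    using theta_props(5,6)[OF s Y t] by (intro arccos_ubound) auto
  ultimately have "2 * pi * n > - pi" using n by linarith
  then have "pi * real_of_int (2 * n + 1) > 0" by (simp add: algebra_simps)
  then have "real_of_int (2 * n + 1) > 0" using pi_gt_zero by (simp add: zero_less_mult_iff)
  then have "2 * n + 1 > 0" by (simp only: of_int_0_less_iff)
  then have "n \<ge> 0" by linarith
  then have "t * omega_p s Y t = theta s Y t + 2 * real (nat n) * pi"
    using n rc by (simp add: algebra_simps)
  then show "t \<in> crit_delays s Y" using t by (auto simp: crit_delays_def)
qed



lemma final_alg:
  fixes s x w C S w' th' t0 :: real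
  assumes s: "s > 0" and w: "w > 0" and t0: "t0 > 0" and x: "x > 0"
    and R1: "- (w^2) + s * x + s * (1 - 2 * x) * C - s * w * S = 0"
    and R2: "(s + x) * w - s * w * C - s * (1 - 2 * x) * S = 0"
    and CS: "C^2 + S^2 = 1"
    and R1': "- (2 * w * w') + s * (s * x) + s * (- 2 * (s * x)) * C - s * (1 - 2 * x) * S * th'
              - s * (w' * S + w * C * th') = 0"
    and R2': "(s * x) * w + (s + x) * w' - s * (w' * C - w * S * th') + s * (2 * (s * x)) * S
              - s * (1 - 2 * x) * C * th' = 0"
    and \<Delta>: "w + t0 * w' - th' \<noteq> 0" and S0: "S > 0"
  defines "a \<equiv> \<i> * complex_of_real w"
  defines "e \<equiv> Complex C (- S)"
  defines "Q \<equiv> complex_of_real (- s) * a + complex_of_real (s * (1 - 2 * x))"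
  defines "d0 \<equiv> 2 * a + complex_of_real (s + x) + complex_of_real (- s) * e - complex_of_real t0 * Q * e"
    and "Ft \<equiv> complex_of_real (s * x) * a + complex_of_real (- 2 * s^2 * x) * e - a * Q * e
             + complex_of_real (s^2 * x)"
  shows "Re (- Ft / d0) \<noteq> 0"
proof
  define c where "c = s * (1 - 2 * x)"
  define p where "p = s + x"
  define \<Delta> where "\<Delta> = w + t0 * w' - th'"
  define E' where "E' = (2 * a + complex_of_real p - complex_of_real s * e) * (\<i> * complex_of_real w')
     + (complex_of_real (s * x) * a + complex_of_real (s^2 * x)) + complex_of_real (- 2 * s^2 * x) * e
     - \<i> * complex_of_real th' * Q * e"
  have E'0: "E' = 0"
    using R1' R2' unfolding E'_def a_def e_def Q_def p_def
    by (simp add: complex_eq_iff algebra_simps power2_eq_square)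
  have Qe: "Q * e = Complex (w^2 - s * x) (- (p * w))"
  proof -
    have "Q * e = Complex (c * C - s * w * S) (- (c * S + s * w * C))"
      unfolding Q_def a_def e_def c_def by (simp add: complex_eq_iff algebra_simps)
    also have "c * C - s * w * S = w^2 - s * x" using R1 unfolding c_def by simp
    also have "c * S + s * w * C = p * w" using R2 unfolding c_def p_def by (simp add: algebra_simps)
    finally show ?thesis .
  qed
  have FtE: "Ft = E' - \<i> * complex_of_real w' * d0 - \<i> * complex_of_real \<Delta> * Q * e"
    unfolding Ft_def E'_def d0_def \<Delta>_def p_def a_def
    by (simp add: algebra_simps)
  have d0: "d0 = Complex (p - s * C - t0 * (w^2 - s * x)) (2 * w + s * S + t0 * (p * w))"
  proof -
    have "d0 = 2 * a + complex_of_real p + complex_of_real (- s) * e - complex_of_real t0 * (Q * e)"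
      unfolding d0_def p_def by (simp add: algebra_simps)
    also have "\<dots> = 2 * a + complex_of_real p + complex_of_real (- s) * e
        - complex_of_real t0 * Complex (w^2 - s * x) (- (p * w))" by (simp only: Qe)
    also have "\<dots> = Complex (p - s * C - t0 * (w^2 - s * x)) (2 * w + s * S + t0 * (p * w))"
      unfolding a_def e_def by (simp add: complex_eq_iff algebra_simps)
    finally show ?thesis .
  qed
  have d0nz: "d0 \<noteq> 0"
  proof -
    have "Im d0 = 2 * w + s * S + t0 * (p * w)" using d0 by simp
    also have "\<dots> > 0" using w s S0 t0 x by (simp add: p_def add_pos_nonneg add_pos_pos)
    finally show ?thesis by auto
  qed
  have ImQd: "Im (Q * e * cnj d0) = - (w * (2 * w^2 + x^2))"
  proof -
    have h: "(w^2 - s * x) * S - p * w * C = - (s * w)"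
    proof -
      have r1: "w^2 - s * x = c * C - s * w * S" using R1 unfolding c_def by simp
      have r2: "p * w = c * S + s * w * C" using R2 unfolding c_def p_def by (simp add: algebra_simps)
      have "(w^2 - s * x) * S - p * w * C = (c * C - s * w * S) * S - (c * S + s * w * C) * C"
        by (simp only: r1 r2)
      also have "\<dots> = - (s * w) * (C^2 + S^2)" by (simp add: algebra_simps power2_eq_square)
      finally show ?thesis using CS by simp
    qed
    have "Im (Q * e * cnj d0) = - ((w^2 - s * x) * (2 * w + s * S + t0 * (p * w)))
        - (p * w) * (p - s * C - t0 * (w^2 - s * x))"
      unfolding Qe d0 by (simp add: algebra_simps)
    also have "\<dots> = - 2 * w * (w^2 - s * x) - p^2 * w - s * ((w^2 - s * x) * S - p * w * C)"
      by (simp add: algebra_simps power2_eq_square)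
    also have "\<dots> = - 2 * w * (w^2 - s * x) - p^2 * w - s * (- (s * w))" by (simp only: h)
    also have "\<dots> = - (w * (2 * w^2 + x^2))" unfolding p_def
      by (simp add: algebra_simps power2_eq_square)
    finally show ?thesis .
  qed
  assume Re0: "Re (- Ft / d0) = 0"
  define v where "v = Im (- Ft / d0)"
  have z: "- Ft / d0 = \<i> * complex_of_real v" using Re0 by (simp add: complex_eq_iff v_def)
  have "- Ft = \<i> * complex_of_real v * d0" using z d0nz by (simp add: field_simps)
  then have "\<i> * (complex_of_real \<Delta> * (Q * e)) = \<i> * (complex_of_real (v - w') * d0)"
    unfolding FtE E'0 by (simp add: algebra_simps)
  then have "complex_of_real \<Delta> * (Q * e) = complex_of_real (v - w') * d0" by simp
  then have "complex_of_real \<Delta> * (Q * e * cnj d0) = complex_of_real (v - w') * (d0 * cnj d0)"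
    by (metis mult.assoc)
  then have "Im (complex_of_real \<Delta> * (Q * e * cnj d0)) = Im (complex_of_real (v - w') * (d0 * cnj d0))"
    by (rule arg_cong)
  then have "\<Delta> * Im (Q * e * cnj d0) = (v - w') * Im (d0 * cnj d0)"
    by simp
  then have "\<Delta> * Im (Q * e * cnj d0) = 0" by simp
  then have "Im (Q * e * cnj d0) = 0" using \<Delta> by (simp add: \<Delta>_def)
  then have "w * (2 * w^2 + x^2) = 0" using ImQd by simp
  moreover have "w * (2 * w^2 + x^2) > 0" using w x by (simp add: add_pos_pos)
  ultimately show False by linarith
qed



definition Dl :: "real \<Rightarrow> real \<Rightarrow> complex \<Rightarrow> real \<Rightarrow> complex" where
  "Dl s Y l t = 2 * l + of_real (pc s Y t) + of_real (qc s) * exp (- l * of_real t)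
     - of_real t * (of_real (qc s) * l + of_real (cc s Y t)) * exp (- l * of_real t)"

lemma charD_deriv: "((\<lambda>l. charD s Y l t) has_field_derivative Dl s Y l t) (at l)"
  unfolding charD_def Dl_def
  by (auto intro!: derivative_eq_intros simp: algebra_simps power2_eq_square)

lemma Dl_iw:
  "Dl s Y (\<i> * complex_of_real w) t =
     Complex ((s + xp s Y t) - s * cos (w * t) - t * (s * (1 - 2 * xp s Y t) * cos (w * t) - s * w * sin (w * t)))
             (2 * w + s * sin (w * t) + t * (s * (1 - 2 * xp s Y t) * sin (w * t) + s * w * cos (w * t)))"
  unfolding Dl_def exp_imag coef
  by (simp add: complex_eq_iff algebra_simps)

lemma part2a:
  assumes s: "s > 0" and Y: "Y > 3 * s" and t: "t0 \<in> crit_delays s Y"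
  shows "deriv (\<lambda>l. charD s Y l t0) (\<i> * of_real (omega_p s Y t0)) \<noteq> 0"
    "deriv (\<lambda>l. charD s Y l t0) (- \<i> * of_real (omega_p s Y t0)) \<noteq> 0"
    "\<forall>k::int. k \<noteq> 1 \<and> k \<noteq> -1 \<longrightarrow> charD s Y (\<i> * of_real (real_of_int k * omega_p s Y t0)) t0 \<noteq> 0"
proof -
  have t': "t0 \<in> {0<..<taustar s Y}" using t by (simp add: crit_delays_def)
  note TP = theta_props[OF s Y t']
  note cs = crit_cos_sin[OF t]
  define \<omega> where "\<omega> = omega_p s Y t0"
  define x where "x = xp s Y t0"
  have x: "0 < x" "x < 1/3" using xrange[OF s Y t'] by (auto simp: x_def)
  have t0: "t0 > 0" using t' by simp
  have \<omega>: "\<omega> > 0" using TP(1) by (simp add: \<omega>_def)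
  have R2: "s * (1 - 2 * x) * sin (\<omega> * t0) + s * \<omega> * cos (\<omega> * t0) = (s + x) * \<omega>"
    using TP(3) cs unfolding \<omega>_def x_def by (simp add: algebra_simps)
  have pos: "2 * \<omega> + s * sin (\<omega> * t0) + t0 * ((s + x) * \<omega>) > 0"
    using \<omega> s TP(4) cs t0 x unfolding \<omega>_def by (simp add: add_pos_pos add_pos_nonneg)
  have "Im (Dl s Y (\<i> * of_real \<omega>) t0) = 2 * \<omega> + s * sin (\<omega> * t0) + t0 * ((s + x) * \<omega>)"
    unfolding Dl_iw using R2 by (simp add: x_def)
  then have "Dl s Y (\<i> * of_real \<omega>) t0 \<noteq> 0" using pos by auto
  then show "deriv (\<lambda>l. charD s Y l t0) (\<i> * of_real (omega_p s Y t0)) \<noteq> 0"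
    using DERIV_imp_deriv[OF charD_deriv] by (simp add: \<omega>_def)
  have "Im (Dl s Y (\<i> * of_real (- \<omega>)) t0) = - (2 * \<omega> + s * sin (\<omega> * t0) + t0 * ((s + x) * \<omega>))"
    unfolding Dl_iw using R2 by (simp add: x_def algebra_simps)
  then have "Dl s Y (- \<i> * of_real \<omega>) t0 \<noteq> 0" using pos by (auto simp del: mult_minus_left)
  then show "deriv (\<lambda>l. charD s Y l t0) (- \<i> * of_real (omega_p s Y t0)) \<noteq> 0"
    using DERIV_imp_deriv[OF charD_deriv] by (simp add: \<omega>_def)
  show "\<forall>k::int. k \<noteq> 1 \<and> k \<noteq> -1 \<longrightarrow> charD s Y (\<i> * of_real (real_of_int k * omega_p s Y t0)) t0 \<noteq> 0"
  proof (intro allI impI notI)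
    fix k :: int assume k: "k \<noteq> 1 \<and> k \<noteq> -1" and r: "charD s Y (\<i> * of_real (real_of_int k * omega_p s Y t0)) t0 = 0"
    have "(real_of_int k * \<omega>)^2 = \<omega>^2" using root_char(1)[OF s Y t' r] by (simp add: \<omega>_def)
    then have "(real_of_int k)^2 = 1" using \<omega> by (simp add: power_mult_distrib)
    then have "real_of_int (k^2) = 1" by simp
    then have "k^2 = 1" by (simp only: of_int_eq_1_iff)
    then have "k = 1 \<or> k = -1" by (simp add: power2_eq_1_iff)
    then show False using k by blast
  qed
qed

lemma Dl_cont:
  assumes "\<epsilon> > 0" and Y0: "Y \<noteq> 0"
  shows "\<exists>\<delta>>0. \<forall>l t. cmod (l - a) < \<delta> \<longrightarrow> \<bar>t - t0\<bar> < \<delta> \<longrightarrow> cmod (Dl s Y l t - Dl s Y a t0) < \<epsilon>"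
proof -
  have "continuous_on UNIV (\<lambda>z. Dl s Y (fst z) (snd z))"
    unfolding Dl_def pc_def qc_def cc_def using Y0 by (intro continuous_intros) auto
  then have "continuous (at (a, t0)) (\<lambda>z. Dl s Y (fst z) (snd z))"
    by (simp add: continuous_on_eq_continuous_at)
  then obtain \<delta> where \<delta>: "\<delta> > 0" "\<And>z. dist z (a, t0) < \<delta> \<Longrightarrow> dist (Dl s Y (fst z) (snd z)) (Dl s Y a t0) < \<epsilon>"
    using assms unfolding continuous_at_eps_delta by (metis fst_conv snd_conv)
  show ?thesis
  proof (intro exI[of _ "\<delta>/2"] conjI allI impI)
    show "\<delta>/2 > 0" using \<delta> by simp
    fix l t assume "cmod (l - a) < \<delta>/2" "\<bar>t - t0\<bar> < \<delta>/2"
    have "dist (l, t) (a, t0) = sqrt ((dist l a)^2 + (dist t t0)^2)" by (rule dist_Pair_Pair)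
    also have "\<dots> \<le> \<bar>dist l a\<bar> + \<bar>dist t t0\<bar>" by (rule sqrt_sum_squares_le_sum_abs)
    also have "\<dots> < \<delta>" using \<open>cmod (l - a) < \<delta>/2\<close> \<open>\<bar>t - t0\<bar> < \<delta>/2\<close> by (simp add: dist_norm)
    finally have "dist (l, t) (a, t0) < \<delta>" .
    then show "cmod (Dl s Y l t - Dl s Y a t0) < \<epsilon>" using \<delta>(2)[of "(l, t)"] by (simp add: dist_norm)
  qed
qed

definition Ftd :: "real \<Rightarrow> real \<Rightarrow> complex \<Rightarrow> real \<Rightarrow> complex" where
  "Ftd s Y a t = complex_of_real (s * xp s Y t) * a + complex_of_real (- 2 * s^2 * xp s Y t) * exp (- a * of_real t)
     - a * (complex_of_real (- s) * a + complex_of_real (s * (1 - 2 * xp s Y t))) * exp (- a * of_real t)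
     + complex_of_real (s^2 * xp s Y t)"

lemma charD_t_deriv: "((\<lambda>t. charD s Y a t) has_vector_derivative Ftd s Y a t0) (at t0)"
proof -
  define G where "G z = a^2 + (of_real s + of_real (s/Y) * exp (of_real s * z)) * a
     + (of_real (- s) * a + of_real s * (1 - 2 * (of_real (s/Y) * exp (of_real s * z)))) * exp (- a * z)
     + of_real s * (of_real (s/Y) * exp (of_real s * z))" for z :: complex
  have eq: "(\<lambda>t. charD s Y a t) = (\<lambda>t. G (of_real t))"
    by (rule ext) (simp add: G_def charD_def coef xp_def of_real_exp)
  have "(G has_field_derivative Ftd s Y a t0) (at (of_real t0))"
    unfolding G_def Ftd_def xp_def
    apply (rule derivative_eq_intros refl)+
    apply (simp add: exp_of_real[symmetric] algebra_simps power2_eq_square)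
    done
  then show ?thesis unfolding eq by (rule has_vector_derivative_real_field)
qed

lemma xp_deriv: "(xp s Y has_real_derivative s * xp s Y t) (at t)"
proof -
  define k where "k = s / Y"
  have "((\<lambda>t. k * exp (s * t)) has_real_derivative s * (k * exp (s * t))) (at t)"
    by (auto intro!: derivative_eq_intros simp: algebra_simps)
  then show ?thesis by (simp add: xp_def[abs_def] k_def)
qed

lemma omega_deriv:
  assumes s: "s > 0" and Y: "Y > 3 * s" and t: "t \<in> {0<..<taustar s Y}"
  shows "\<exists>D. (omega_p s Y has_real_derivative D) (at t)"
proof -
  define x where "x = xp s Y t"
  have x: "0 < x" "x < 1/3" using xrange[OF s Y t] by (auto simp: x_def)
  have fq: "omega_p s Y = (\<lambda>t. sqrt ((- ((xp s Y t)^2) + sqrt ((xp s Y t)^4 + s^2 * (12 * (xp s Y t)^2 - 16 * xp s Y t + 4))) / 2))"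
    by (rule ext) (simp add: omega_p_def Let_def)
  have in0: "0 < x^4 + s^2 * (12 * x^2 - 16 * x + 4)"
  proof -
    have "s^2 * (1 - 3*x) * (1 - x) > 0" using s x by simp
    moreover have "x^4 + s^2 * (12 * x^2 - 16 * x + 4) = x^4 + 4 * (s^2 * (1 - 3*x) * (1 - x))"
      by (simp add: algebra_simps power2_eq_square)
    moreover have "x^4 > 0" using x by simp
    ultimately show ?thesis by linarith
  qed
  have out0: "0 < (- (x^2) + sqrt (x^4 + s^2 * (12 * x^2 - 16 * x + 4))) / 2"
    using Wfacts(1)[OF s x] by simp
  show ?thesis unfolding fq
    apply (rule exI)
    apply (rule derivative_eq_intros xp_deriv refl | use in0 out0 in \<open>simp add: x_def\<close>)+
    done
qed

lemma theta_deriv: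
  assumes s: "s > 0" and Y: "Y > 3 * s" and t: "t \<in> {0<..<taustar s Y}"
    and w': "(omega_p s Y has_real_derivative w') (at t)"
  shows "\<exists>D. (theta s Y has_real_derivative D) (at t)"
proof -
  define x where "x = xp s Y t"
  have x: "0 < x" "x < 1/3" using xrange[OF s Y t] by (auto simp: x_def)
  note TP = theta_props[OF s Y t]
  have fq: "theta s Y = (\<lambda>t. arccos (((omega_p s Y t)^2 * (1 + s - xp s Y t) - (1 - 2 * xp s Y t) * s * xp s Y t)
       / (s * ((1 - 2 * xp s Y t)^2 + (omega_p s Y t)^2))))"
    by (rule ext) (simp add: theta_def h2_def Let_def)
  have den: "s * ((1 - 2 * x)^2 + (omega_p s Y t)^2) \<noteq> 0" using s TP(1)
    by (simp add: add_nonneg_pos)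
  have hb: "- 1 < ((omega_p s Y t)^2 * (1 + s - x) - (1 - 2 * x) * s * x) / (s * ((1 - 2 * x)^2 + (omega_p s Y t)^2))"
       "((omega_p s Y t)^2 * (1 + s - x) - (1 - 2 * x) * s * x) / (s * ((1 - 2 * x)^2 + (omega_p s Y t)^2)) < 1"
    using TP(5,6) by (simp_all add: h2_def Let_def x_def)
  show ?thesis unfolding fq
    apply (rule exI)
    apply (rule derivative_eq_intros xp_deriv w' refl | use den hb in \<open>simp add: x_def\<close>)+
    done
qed

lemma local_zero_deriv:
  fixes f :: "real \<Rightarrow> real"
  assumes s: "s > 0" and Y: "Y > 3 * s" and t: "t0 \<in> {0<..<taustar s Y}"
    and z: "\<And>t. t \<in> {0<..<taustar s Y} \<Longrightarrow> f t = 0"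
    and d: "(f has_real_derivative D) (at t0)"
  shows "D = 0"
proof (rule DERIV_local_const[OF d])
  show "0 < min t0 (taustar s Y - t0)" using t by simp
  show "\<forall>y. \<bar>t0 - y\<bar> < min t0 (taustar s Y - t0) \<longrightarrow> f t0 = f y"
  proof (intro allI impI)
    fix y assume "\<bar>t0 - y\<bar> < min t0 (taustar s Y - t0)"
    then have "y \<in> {0<..<taustar s Y}" by auto
    then show "f t0 = f y" using z t by simp
  qed
qed

lemma transv:
  assumes s: "s > 0" and Y: "Y > 3 * s" and t: "t0 \<in> crit_delays s Y"
    and hyp: "deriv (\<lambda>t. t * omega_p s Y t) t0 \<noteq> deriv (theta s Y) t0"
  shows "Re (- Ftd s Y (\<i> * of_real (omega_p s Y t0)) t0 / Dl s Y (\<i> * of_real (omega_p s Y t0)) t0) \<noteq> 0"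
proof -
  have t': "t0 \<in> {0<..<taustar s Y}" using t by (simp add: crit_delays_def)
  note TP = theta_props[OF s Y t']
  note cs = crit_cos_sin[OF t]
  obtain w' where w': "(omega_p s Y has_real_derivative w') (at t0)" using omega_deriv[OF s Y t'] by blast
  obtain th' where th': "(theta s Y has_real_derivative th') (at t0)" using theta_deriv[OF s Y t' w'] by blast
  define x where "x = xp s Y t0"
  define \<omega> where "\<omega> = omega_p s Y t0"
  define C where "C = cos (theta s Y t0)"
  define S where "S = sin (theta s Y t0)"
  have x: "0 < x" "x < 1/3" using xrange[OF s Y t'] by (auto simp: x_def)
  have t0: "t0 > 0" using t' by simp
  have d1: "((\<lambda>t. - ((omega_p s Y t)^2) + s * xp s Y t + s * (1 - 2 * xp s Y t) * cos (theta s Y t)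
      - s * omega_p s Y t * sin (theta s Y t)) has_real_derivative
      (- (2 * \<omega> * w') + s * (s * x) + s * (- 2 * (s * x)) * C - s * (1 - 2 * x) * S * th'
              - s * (w' * S + \<omega> * C * th'))) (at t0)"
    by (auto intro!: derivative_eq_intros xp_deriv w' th' simp: x_def \<omega>_def C_def S_def algebra_simps)
  have R1': "- (2 * \<omega> * w') + s * (s * x) + s * (- 2 * (s * x)) * C - s * (1 - 2 * x) * S * th'
              - s * (w' * S + \<omega> * C * th') = 0"
    by (rule local_zero_deriv[OF s Y t' _ d1]) (use theta_props(2)[OF s Y] in auto)
  have d2: "((\<lambda>t. (s + xp s Y t) * omega_p s Y t - s * omega_p s Y t * cos (theta s Y t)
      - s * (1 - 2 * xp s Y t) * sin (theta s Y t)) has_real_derivative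
      ((s * x) * \<omega> + (s + x) * w' - s * (w' * C - \<omega> * S * th') + s * (2 * (s * x)) * S
              - s * (1 - 2 * x) * C * th')) (at t0)"
    by (auto intro!: derivative_eq_intros xp_deriv w' th' simp: x_def \<omega>_def C_def S_def algebra_simps)
  have R2': "(s * x) * \<omega> + (s + x) * w' - s * (w' * C - \<omega> * S * th') + s * (2 * (s * x)) * S
              - s * (1 - 2 * x) * C * th' = 0"
    by (rule local_zero_deriv[OF s Y t' _ d2]) (use theta_props(3)[OF s Y] in auto)
  have dprod: "((\<lambda>t. t * omega_p s Y t) has_real_derivative (\<omega> + t0 * w')) (at t0)"
    by (rule derivative_eq_intros w' refl | simp add: \<omega>_def)+
  have \<Delta>: "\<omega> + t0 * w' - th' \<noteq> 0"
    using hyp DERIV_imp_deriv[OF dprod] DERIV_imp_deriv[OF th'] by simp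
  have E: "exp (- (\<i> * complex_of_real \<omega>) * complex_of_real t0) = Complex C (- S)"
    unfolding exp_imag using cs by (simp add: C_def S_def \<omega>_def)
  have main: "Re (- (complex_of_real (s * x) * (\<i> * complex_of_real \<omega>) + complex_of_real (- 2 * s^2 * x) * Complex C (- S)
      - (\<i> * complex_of_real \<omega>) * (complex_of_real (- s) * (\<i> * complex_of_real \<omega>) + complex_of_real (s * (1 - 2 * x))) * Complex C (- S)
      + complex_of_real (s^2 * x)) /
      (2 * (\<i> * complex_of_real \<omega>) + complex_of_real (s + x) + complex_of_real (- s) * Complex C (- S)
       - complex_of_real t0 * (complex_of_real (- s) * (\<i> * complex_of_real \<omega>) + complex_of_real (s * (1 - 2 * x))) * Complex C (- S)))
      \<noteq> 0"
    by (rule final_alg[OF s _ t0 x(1) _ _ _ R1' R2' \<Delta>])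
       (use TP in \<open>simp_all add: \<omega>_def x_def C_def S_def\<close>)
  show ?thesis
    unfolding Ftd_def Dl_def coef E[unfolded \<omega>_def] using main by (simp add: x_def \<omega>_def)
qed

theorem theorem3p4:
  fixes s Y :: real
  assumes s_pos: "s > 0" and Y_gt: "Y > 3 * s"
  shows
    "(\<forall>t \<in> {0<..<taustar s Y}.
        (\<exists>w::real. w > 0 \<and> charD s Y (\<i> * of_real w) t = 0
                        \<and> charD s Y (- \<i> * of_real w) t = 0)
        \<longleftrightarrow> t \<in> crit_delays s Y)
   \<and> (\<forall>t0 \<in> crit_delays s Y.
        charD s Y (\<i> * of_real (omega_p s Y t0)) t0 = 0
      \<and> charD s Y (- \<i> * of_real (omega_p s Y t0)) t0 = 0
      \<and> deriv (\<lambda>l. charD s Y l t0) (\<i> * of_real (omega_p s Y t0)) \<noteq> 0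
      \<and> deriv (\<lambda>l. charD s Y l t0) (- \<i> * of_real (omega_p s Y t0)) \<noteq> 0
      \<and> (\<forall>k::int. k \<noteq> 1 \<and> k \<noteq> -1 \<longrightarrow>
            charD s Y (\<i> * of_real (real_of_int k * omega_p s Y t0)) t0 \<noteq> 0)
      \<and> (deriv (\<lambda>t. t * omega_p s Y t) t0 \<noteq> deriv (theta s Y) t0 \<longrightarrow>
           (\<exists>lam L e. e > 0 \<and> lam t0 = \<i> * of_real (omega_p s Y t0)
              \<and> (\<forall>t. \<bar>t - t0\<bar> < e \<longrightarrow> charD s Y (lam t) t = 0)
              \<and> (lam has_vector_derivative L) (at t0))
         \<and> (\<forall>lam L e. e > 0 \<and> lam t0 = \<i> * of_real (omega_p s Y t0)
              \<and> (\<forall>t. \<bar>t - t0\<bar> < e \<longrightarrow> charD s Y (lam t) t = 0)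
              \<and> (lam has_vector_derivative L) (at t0)
              \<longrightarrow> Re L \<noteq> 0)))"
proof -
  have Y0: "Y \<noteq> 0" using s_pos Y_gt by simp
  have P2: "charD s Y (\<i> * of_real (omega_p s Y t0)) t0 = 0
      \<and> charD s Y (- \<i> * of_real (omega_p s Y t0)) t0 = 0
      \<and> deriv (\<lambda>l. charD s Y l t0) (\<i> * of_real (omega_p s Y t0)) \<noteq> 0
      \<and> deriv (\<lambda>l. charD s Y l t0) (- \<i> * of_real (omega_p s Y t0)) \<noteq> 0
      \<and> (\<forall>k::int. k \<noteq> 1 \<and> k \<noteq> -1 \<longrightarrow>
            charD s Y (\<i> * of_real (real_of_int k * omega_p s Y t0)) t0 \<noteq> 0)
      \<and> (deriv (\<lambda>t. t * omega_p s Y t) t0 \<noteq> deriv (theta s Y) t0 \<longrightarrow>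
           (\<exists>lam L e. e > 0 \<and> lam t0 = \<i> * of_real (omega_p s Y t0)
              \<and> (\<forall>t. \<bar>t - t0\<bar> < e \<longrightarrow> charD s Y (lam t) t = 0)
              \<and> (lam has_vector_derivative L) (at t0))
         \<and> (\<forall>lam L e. e > 0 \<and> lam t0 = \<i> * of_real (omega_p s Y t0)
              \<and> (\<forall>t. \<bar>t - t0\<bar> < e \<longrightarrow> charD s Y (lam t) t = 0)
              \<and> (lam has_vector_derivative L) (at t0)
              \<longrightarrow> Re L \<noteq> 0))" if t: "t0 \<in> crit_delays s Y" for t0
  proof -
    define a where "a = \<i> * complex_of_real (omega_p s Y t0)"
    note r = crit_root[OF s_pos Y_gt t]
    note p2 = part2a[OF s_pos Y_gt t]
    have d0: "Dl s Y a t0 \<noteq> 0"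
      using p2(1) DERIV_imp_deriv[OF charD_deriv] by (simp add: a_def)
    have Fa0: "charD s Y a t0 = 0" using r(1) by (simp add: a_def)
    have contF': "\<exists>\<delta>>0. \<forall>l t. cmod (l - a) < \<delta> \<longrightarrow> \<bar>t - t0\<bar> < \<delta> \<longrightarrow> cmod (Dl s Y l t - Dl s Y a t0) < \<epsilon>"
      if "\<epsilon> > 0" for \<epsilon> using Dl_cont[OF that Y0] by blast
    have contFa: "((\<lambda>t. charD s Y a t) \<longlongrightarrow> 0) (at t0)"
    proof -
      have "isCont (\<lambda>t. charD s Y a t) t0"
        by (rule has_vector_derivative_continuous[OF charD_t_deriv])
      then show ?thesis using Fa0 by (simp add: isCont_def)
    qed
    have derL: "(lam has_vector_derivative (- Ftd s Y a t0 / Dl s Y a t0)) (at t0)"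
      if "e > 0" "lam t0 = a" "\<forall>t. \<bar>t - t0\<bar> < e \<longrightarrow> charD s Y (lam t) t = 0" "isCont lam t0" for lam e
      by (rule ift_deriv[where F="charD s Y" and F'="Dl s Y", OF charD_deriv contF' charD_t_deriv d0 that(2,1,3,4)])
    have ex: "\<exists>lam L e. e > 0 \<and> lam t0 = a \<and> (\<forall>t. \<bar>t - t0\<bar> < e \<longrightarrow> charD s Y (lam t) t = 0)
              \<and> (lam has_vector_derivative L) (at t0)"
    proof -
      obtain lam e where "e > 0" "lam t0 = a" "\<forall>t. \<bar>t - t0\<bar> < e \<longrightarrow> charD s Y (lam t) t = 0" "isCont lam t0"
        using ift_branch[where F="charD s Y" and F'="Dl s Y", OF charD_deriv contF' contFa Fa0 d0] by blast
      then show ?thesis using derL by blast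
    qed
    have all: "Re L \<noteq> 0" if hyp: "deriv (\<lambda>t. t * omega_p s Y t) t0 \<noteq> deriv (theta s Y) t0"
      and "e > 0" "lam t0 = a" "\<forall>t. \<bar>t - t0\<bar> < e \<longrightarrow> charD s Y (lam t) t = 0"
      "(lam has_vector_derivative L) (at t0)" for lam L e
    proof -
      have "isCont lam t0" by (rule has_vector_derivative_continuous[OF that(5)])
      then have "(lam has_vector_derivative (- Ftd s Y a t0 / Dl s Y a t0)) (at t0)"
        using derL that(2,3,4) by blast
      then have "L = - Ftd s Y a t0 / Dl s Y a t0" using vector_derivative_unique_at that(5) by blast
      then show ?thesis using transv[OF s_pos Y_gt t hyp] by (simp add: a_def)
    qed
    show ?thesis using r p2 ex all unfolding a_def by blast
  qed
  show ?thesis using part1[OF s_pos Y_gt] P2 by blast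
qed


end
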